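(* Suppose the cost function $C$ is subadditive and valuations are arbitrary (monotone and normalized). Then the Sequential Mechanism with lexicographic tie-breaking is weakly groupstrategyproof, $1$-budget-balanced (i.e. $\sum_ip_i=C(\overrightarrow{ALG})$), and is an $n$-approximation to the social cost.
   Context: Setting. $N=\{1,\dots,n\}$ is a set of players and $M_1,\dots,M_n$ are pairwise disjoint finite sets; $M=\bigcup_i M_i$; allocations $\vec S=(S_1,\dots,S_n)$ with $S_i\subseteq M_i$ are identified with subsets of $M$. A cost function is a monotone $C:2^M\to\mathbb{R}_{\ge0}$ with $C(\emptyset)=0$; subadditive: $C(S)+C(T)\ge C(S\cup T)$. Valuations $v_i:2^{M_i}\to\mathbb{R}_{\ge0}$ are monotone with $v_i(\emptyset)=0$. Sequential Mechanism with lexicographic tie-breaking: start with $ALG_i=\emptyset$ for all $i$; for $i=1,\dots,n$ in order, set $ALG_i$ to the lexicographically first element (under a fixed order) of $\arg\max_{S\subseteq M_i}v_i(S)-[C(\overrightarrow{ALG}\cup S)-C(\overrightarrow{ALG})]$ (with $\overrightarrow{ALG}$ the current allocation of players $1,\dots,i-1$), and charge $p_i=C(ALG_1,\dots,ALG_i)-C(ALG_1,\dots,ALG_{i-1})$. Weakly groupstrategyproof: for every $K\subseteq N$ and every joint misreport by $K$ (others truthful), if $v_i(S_i)-p_i\le v_i(S'_i)-p'_i$ for all $i\in K$ then $v_j(S_j)-p_j=v_j(S'_j)-p'_j$ for some $j\in K$, where $(\vec S,\vec p)$ and $(\vec S',\vec p')$ are the outputs under truthful reports and under the misreport. Social cost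 $\pi(\vec S)=C(\vec S)+\sum_i[v_i(M_i)-v_i(S_i)]$; $n$-approximation: $\pi(\overrightarrow{ALG})\le n\min_{\vec S}\pi(\vec S)$ for all profiles. *)

theory Defs
  imports Complex_Main
begin

text \<open>Players are indexed 0,...,n-1 (player i is processed i-th). Item sets of
player i: M i. Reported valuation profiles b :: nat => 'a set => real.\<close>

definition cost_function :: "'a set \<Rightarrow> ('a set \<Rightarrow> real) \<Rightarrow> bool" where
  "cost_function MM C \<longleftrightarrow> C {} = 0 \<and> (\<forall>S. S \<subseteq> MM \<longrightarrow> C S \<ge> 0)
     \<and> (\<forall>S T. S \<subseteq> T \<and> T \<subseteq> MM \<longrightarrow> C S \<le> C T)"

definition subadditive :: "'a set \<Rightarrow> ('a set \<Rightarrow> real) \<Rightarrow> bool" where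
  "subadditive MM C \<longleftrightarrow> (\<forall>S T. S \<subseteq> MM \<and> T \<subseteq> MM \<longrightarrow> C (S \<union> T) \<le> C S + C T)"

definition valuation :: "'a set \<Rightarrow> ('a set \<Rightarrow> real) \<Rightarrow> bool" where
  "valuation Mi w \<longleftrightarrow> w {} = 0 \<and> (\<forall>S. S \<subseteq> Mi \<longrightarrow> w S \<ge> 0)
     \<and> (\<forall>S T. S \<subseteq> T \<and> T \<subseteq> Mi \<longrightarrow> w S \<le> w T)"

definition strict_total_on :: "'b set \<Rightarrow> ('b \<Rightarrow> 'b \<Rightarrow> bool) \<Rightarrow> bool" where
  "strict_total_on A R \<longleftrightarrow> (\<forall>x\<in>A. \<not> R x x)
     \<and> (\<forall>x\<in>A. \<forall>y\<in>A. \<forall>z\<in>A. R x y \<and> R y z \<longrightarrow> R x z)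
     \<and> (\<forall>x\<in>A. \<forall>y\<in>A. x \<noteq> y \<longrightarrow> R x y \<or> R y x)"

definition lexfirst :: "('b \<Rightarrow> 'b \<Rightarrow> bool) \<Rightarrow> 'b set \<Rightarrow> 'b" where
  "lexfirst R A = (THE x. x \<in> A \<and> (\<forall>y\<in>A. y \<noteq> x \<longrightarrow> R x y))"

definition seq_choice ::
  "('a set \<Rightarrow> real) \<Rightarrow> (nat \<Rightarrow> 'a set) \<Rightarrow> (nat \<Rightarrow> 'a set \<Rightarrow> 'a set \<Rightarrow> bool)
   \<Rightarrow> (nat \<Rightarrow> 'a set \<Rightarrow> real) \<Rightarrow> nat \<Rightarrow> 'a set \<Rightarrow> 'a set" where
  "seq_choice C M R b i A = lexfirst (R i)
     {S. S \<subseteq> M i \<and> (\<forall>T. T \<subseteq> M i \<longrightarrow>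
          b i T - (C (A \<union> T) - C A) \<le> b i S - (C (A \<union> S) - C A))}"

fun seq_prefix ::
  "('a set \<Rightarrow> real) \<Rightarrow> (nat \<Rightarrow> 'a set) \<Rightarrow> (nat \<Rightarrow> 'a set \<Rightarrow> 'a set \<Rightarrow> bool)
   \<Rightarrow> (nat \<Rightarrow> 'a set \<Rightarrow> real) \<Rightarrow> nat \<Rightarrow> 'a set" where
  "seq_prefix C M R b 0 = {}"
| "seq_prefix C M R b (Suc k) =
     seq_prefix C M R b k \<union> seq_choice C M R b k (seq_prefix C M R b k)"

definition seq_alloc ::
  "('a set \<Rightarrow> real) \<Rightarrow> (nat \<Rightarrow> 'a set) \<Rightarrow> (nat \<Rightarrow> 'a set \<Rightarrow> 'a set \<Rightarrow> bool)
   \<Rightarrow> (nat \<Rightarrow> 'a set \<Rightarrow> real) \<Rightarrow> nat \<Rightarrow> 'a set" where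
  "seq_alloc C M R b i = seq_choice C M R b i (seq_prefix C M R b i)"

definition seq_price ::
  "('a set \<Rightarrow> real) \<Rightarrow> (nat \<Rightarrow> 'a set) \<Rightarrow> (nat \<Rightarrow> 'a set \<Rightarrow> 'a set \<Rightarrow> bool)
   \<Rightarrow> (nat \<Rightarrow> 'a set \<Rightarrow> real) \<Rightarrow> nat \<Rightarrow> real" where
  "seq_price C M R b i = C (seq_prefix C M R b (Suc i)) - C (seq_prefix C M R b i)"

text \<open>Utility of player i (true valuation v) when the reported profile is b.\<close>
definition seq_utility ::
  "('a set \<Rightarrow> real) \<Rightarrow> (nat \<Rightarrow> 'a set) \<Rightarrow> (nat \<Rightarrow> 'a set \<Rightarrow> 'a set \<Rightarrow> bool)
   \<Rightarrow> (nat \<Rightarrow> 'a set \<Rightarrow> real) \<Rightarrow> (nat \<Rightarrow> 'a set \<Rightarrow> real) \<Rightarrow> nat \<Rightarrow> real" where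
  "seq_utility C M R v b i = v i (seq_alloc C M R b i) - seq_price C M R b i"

definition weakly_gsp ::
  "nat \<Rightarrow> ('a set \<Rightarrow> real) \<Rightarrow> (nat \<Rightarrow> 'a set) \<Rightarrow> (nat \<Rightarrow> 'a set \<Rightarrow> 'a set \<Rightarrow> bool)
   \<Rightarrow> (nat \<Rightarrow> 'a set \<Rightarrow> real) \<Rightarrow> bool" where
  "weakly_gsp n C M R v \<longleftrightarrow>
     (\<forall>K v'. K \<subseteq> {..<n} \<and> K \<noteq> {} \<and> (\<forall>i\<in>K. valuation (M i) (v' i))
        \<and> (\<forall>i<n. i \<notin> K \<longrightarrow> v' i = v i)
        \<and> (\<forall>i\<in>K. seq_utility C M R v v i \<le> seq_utility C M R v v' i)
        \<longrightarrow> (\<exists>j\<in>K. seq_utility C M R v v j = seq_utility C M R v v' j))"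

definition social_cost ::
  "nat \<Rightarrow> ('a set \<Rightarrow> real) \<Rightarrow> (nat \<Rightarrow> 'a set) \<Rightarrow> (nat \<Rightarrow> 'a set \<Rightarrow> real)
   \<Rightarrow> (nat \<Rightarrow> 'a set) \<Rightarrow> real" where
  "social_cost n C M v S = C (\<Union>i<n. S i) + (\<Sum>i<n. v i (M i) - v i (S i))"

end

theory Submission
  imports Defs
begin

lemma least_ex:
  assumes "finite A" "A \<noteq> {}" "strict_total_on B R" "A \<subseteq> B"
  shows "\<exists>x\<in>A. \<forall>y\<in>A. y \<noteq> x \<longrightarrow> R x y"
  using assms
proof (induction A rule: finite_ne_induct)
  case (singleton x) then show ?case by simp
next
  case (insert a F)
  have "F \<subseteq> B" using insert.prems(2) by simp
  then obtain x where x: "x \<in> F" "\<forall>y\<in>F. y \<noteq> x \<longrightarrow> R x y"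
    using insert.IH insert.prems(1) by blast
  have tr: "\<forall>x\<in>B. \<forall>y\<in>B. \<forall>z\<in>B. R x y \<and> R y z \<longrightarrow> R x z"
    and tot: "\<forall>x\<in>B. \<forall>y\<in>B. x \<noteq> y \<longrightarrow> R x y \<or> R y x"
    using insert.prems(1) unfolding strict_total_on_def by blast+
  have aB: "a \<in> B" "x \<in> B" "F \<subseteq> B" using insert.prems(2) x by auto
  show ?case
  proof (cases "R a x")
    case True
    have "\<forall>y\<in>insert a F. y \<noteq> a \<longrightarrow> R a y"
    proof (intro ballI impI)
      fix y assume "y \<in> insert a F" "y \<noteq> a"
      then have yF: "y \<in> F" by auto
      show "R a y"
      proof (cases "y = x")
        case True then show ?thesis using \<open>R a x\<close> by simp
      next
        case False then have "R x y" using x yF by auto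
        then show ?thesis using tr aB yF True by blast
      qed
    qed
    then show ?thesis by blast
  next
    case False
    have "a \<noteq> x" using insert.hyps x by auto
    then have "R x a" using tot aB False by blast
    then show ?thesis using x by blast
  qed
qed

lemma lexfirst_in:
  assumes "finite A" "A \<noteq> {}" "strict_total_on B R" "A \<subseteq> B"
  shows "lexfirst R A \<in> A"
proof -
  obtain x where x: "x \<in> A" "\<forall>y\<in>A. y \<noteq> x \<longrightarrow> R x y" using least_ex[OF assms] by blast
  have irr: "\<forall>x\<in>B. \<not> R x x"
    and tr: "\<forall>x\<in>B. \<forall>y\<in>B. \<forall>z\<in>B. R x y \<and> R y z \<longrightarrow> R x z"
    using assms(3) unfolding strict_total_on_def by blast+
  have "\<And>z. z \<in> A \<and> (\<forall>y\<in>A. y \<noteq> z \<longrightarrow> R z y) \<Longrightarrow> z = x"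
  proof (rule ccontr)
    fix z assume z: "z \<in> A \<and> (\<forall>y\<in>A. y \<noteq> z \<longrightarrow> R z y)" "z \<noteq> x"
    then have "R z x" "R x z" using x by auto
    then have "R x x" using tr z x assms(4) by blast
    then show False using irr x assms(4) by blast
  qed
  then have "lexfirst R A = x" unfolding lexfirst_def
    by (rule the_equality[where P="\<lambda>z. z \<in> A \<and> (\<forall>y\<in>A. y \<noteq> z \<longrightarrow> R z y)", OF conjI[OF x(1) x(2)]])
  then show ?thesis using x by simp
qed

lemma choice_prop:
  assumes "finite (M i)" "strict_total_on (Pow (M i)) (R i)"
  shows "seq_choice C M R b i A \<subseteq> M i \<and> (\<forall>T. T \<subseteq> M i \<longrightarrow>
          b i T - (C (A \<union> T) - C A) \<le> b i (seq_choice C M R b i A)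
            - (C (A \<union> seq_choice C M R b i A) - C A))"
proof -
  define f where "f S = b i S - (C (A \<union> S) - C A)" for S
  define X where "X = {S. S \<subseteq> M i \<and> (\<forall>T. T \<subseteq> M i \<longrightarrow> f T \<le> f S)}"
  have finP: "finite (Pow (M i))" using assms(1) by simp
  have "Max (f ` Pow (M i)) \<in> f ` Pow (M i)" using finP by (intro Max_in) auto
  then obtain S where S: "S \<subseteq> M i" "f S = Max (f ` Pow (M i))" by auto
  have "\<forall>T. T \<subseteq> M i \<longrightarrow> f T \<le> f S"
  proof (intro allI impI)
    fix T assume "T \<subseteq> M i"
    then have "f T \<in> f ` Pow (M i)" by simp
    then show "f T \<le> f S" unfolding S(2) using finP by (intro Max_ge) auto
  qed
  then have SX: "S \<in> X" using S unfolding X_def by simp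
  have XP: "X \<subseteq> Pow (M i)" unfolding X_def by auto
  have fX: "finite X" using finP XP by (rule finite_subset[rotated])
  have XN: "X \<noteq> {}" using SX by blast
  have L: "lexfirst (R i) X \<in> X" by (rule lexfirst_in[OF fX XN assms(2) XP])
  have E: "seq_choice C M R b i A = lexfirst (R i) X"
    unfolding seq_choice_def X_def f_def by (rule refl)
  have "seq_choice C M R b i A \<in> X" unfolding E by (rule L)
  then show ?thesis unfolding X_def f_def mem_Collect_eq by blast
qed

lemma prefix_alloc: "seq_prefix C M R b k = (\<Union>j<k. seq_alloc C M R b j)"
  by (induction k) (auto simp: seq_alloc_def lessThan_Suc)

lemma prefix_eq:
  "(\<forall>j<k. b j = b' j) \<Longrightarrow> seq_prefix C M R b k = seq_prefix C M R b' k"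
  by (induction k) (auto simp: seq_choice_def)

lemma prefix_sub:
  assumes "\<forall>i<n. finite (M i)" "\<forall>i<n. strict_total_on (Pow (M i)) (R i)" "k \<le> n"
  shows "seq_prefix C M R b k \<subseteq> (\<Union>j<n. M j)"
  using assms(3)
proof (induction k)
  case 0 then show ?case by simp
next
  case (Suc k)
  then have "seq_choice C M R b k (seq_prefix C M R b k) \<subseteq> M k"
    using choice_prop assms by (metis Suc_le_lessD)
  moreover have "k < n" using Suc.prems by simp
  then have "M k \<subseteq> (\<Union>j<n. M j)" by blast
  ultimately show ?case using Suc by auto
qed

theorem theorem7p4:
  fixes n :: nat and M :: "nat \<Rightarrow> 'a set" and C :: "'a set \<Rightarrow> real"
    and v :: "nat \<Rightarrow> 'a set \<Rightarrow> real" and R :: "nat \<Rightarrow> 'a set \<Rightarrow> 'a set \<Rightarrow> bool"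
  assumes fin: "\<forall>i<n. finite (M i)"
    and disj: "\<forall>i<n. \<forall>j<n. i \<noteq> j \<longrightarrow> M i \<inter> M j = {}"
    and cost: "cost_function (\<Union>i<n. M i) C"
    and subadd: "subadditive (\<Union>i<n. M i) C"
    and val: "\<forall>i<n. valuation (M i) (v i)"
    and order: "\<forall>i<n. strict_total_on (Pow (M i)) (R i)"
  shows "weakly_gsp n C M R v
    \<and> (\<Sum>i<n. seq_price C M R v i) = C (\<Union>i<n. seq_alloc C M R v i)
    \<and> (\<forall>S. (\<forall>i<n. S i \<subseteq> M i) \<longrightarrow>
         social_cost n C M v (seq_alloc C M R v) \<le> real n * social_cost n C M v S)"
proof (intro conjI allI impI)
  have C0: "C {} = 0" using cost unfolding cost_function_def by auto
  have mono: "\<And>S T. S \<subseteq> T \<Longrightarrow> T \<subseteq> (\<Union>i<n. M i) \<Longrightarrow> C S \<le> C T"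
    using cost unfolding cost_function_def by auto
  have sa: "\<And>S T. S \<subseteq> (\<Union>i<n. M i) \<Longrightarrow> T \<subseteq> (\<Union>i<n. M i) \<Longrightarrow> C (S \<union> T) \<le> C S + C T"
    using subadd unfolding subadditive_def by auto
  have price: "\<And>b i. seq_price C M R b i = C (seq_prefix C M R b i \<union> seq_alloc C M R b i)
       - C (seq_prefix C M R b i)"
    by (simp add: seq_price_def seq_alloc_def)
  show BB: "(\<Sum>i<n. seq_price C M R v i) = C (\<Union>i<n. seq_alloc C M R v i)"
  proof -
    have "(\<Sum>i<n. seq_price C M R v i) = C (seq_prefix C M R v n) - C (seq_prefix C M R v 0)"
      unfolding seq_price_def by (rule sum_lessThan_telescope)
    then show ?thesis using C0 prefix_alloc[of C M R v n] by simp
  qed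
  show "weakly_gsp n C M R v"
    unfolding weakly_gsp_def
  proof (intro allI impI)
    fix K v'
    assume H: "K \<subseteq> {..<n} \<and> K \<noteq> {} \<and> (\<forall>i\<in>K. valuation (M i) (v' i)) \<and>
        (\<forall>i<n. i \<notin> K \<longrightarrow> v' i = v i) \<and>
        (\<forall>i\<in>K. seq_utility C M R v v i \<le> seq_utility C M R v v' i)"
    define i where "i = Min K"
    have finK: "finite K" using H finite_subset by blast
    have iK: "i \<in> K" unfolding i_def using finK H Min_in by blast
    have iN: "i < n" using iK H by auto
    have "\<forall>j<i. v j = v' j"
    proof (intro allI impI)
      fix j assume "j < i"
      then have "j \<notin> K" unfolding i_def using finK Min_le by fastforce
      then show "v j = v' j" using H \<open>j < i\<close> iN by auto
    qed
    then have P: "seq_prefix C M R v i = seq_prefix C M R v' i" by (rule prefix_eq)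
    define Pf where "Pf = seq_prefix C M R v i"
    have fi: "finite (M i)" using fin iN by blast
    have oi: "strict_total_on (Pow (M i)) (R i)" using order iN by blast
    have cp: "seq_alloc C M R v i \<subseteq> M i \<and> (\<forall>T. T \<subseteq> M i \<longrightarrow>
          v i T - (C (Pf \<union> T) - C Pf) \<le> v i (seq_alloc C M R v i)
            - (C (Pf \<union> seq_alloc C M R v i) - C Pf))"
      unfolding seq_alloc_def Pf_def by (rule choice_prop[of M i R, OF fi oi])
    have "seq_alloc C M R v' i \<subseteq> M i"
      unfolding seq_alloc_def using choice_prop[of M i R, OF fi oi] by blast
    then have "v i (seq_alloc C M R v' i) - (C (Pf \<union> seq_alloc C M R v' i) - C Pf)
        \<le> v i (seq_alloc C M R v i) - (C (Pf \<union> seq_alloc C M R v i) - C Pf)"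
      using cp by blast
    then have "seq_utility C M R v v' i \<le> seq_utility C M R v v i"
      unfolding seq_utility_def price using P Pf_def by simp
    moreover have "seq_utility C M R v v i \<le> seq_utility C M R v v' i" using H iK by blast
    ultimately show "\<exists>j\<in>K. seq_utility C M R v v j = seq_utility C M R v v' j"
      using iK by force
  qed
  fix S assume S: "\<forall>i<n. S i \<subseteq> M i"
  define U where "U = (\<Union>i<n. S i)"
  have UM: "U \<subseteq> (\<Union>i<n. M i)" using S unfolding U_def by blast
  define g where "g i = v i (M i) - v i (S i)" for i
  have g0: "g i \<ge> 0" if iN: "i < n" for i
  proof -
    have vi: "valuation (M i) (v i)" using val iN by blast
    have Si: "S i \<subseteq> M i" using S iN by blast
    have "v i (S i) \<le> v i (M i)" using vi Si unfolding valuation_def by blast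
    then show ?thesis unfolding g_def by simp
  qed
  have per: "v i (M i) - v i (seq_alloc C M R v i) + seq_price C M R v i \<le> g i + C U"
    if iN: "i < n" for i
  proof -
    define Pf where "Pf = seq_prefix C M R v i"
    have fi: "finite (M i)" using fin iN by blast
    have oi: "strict_total_on (Pow (M i)) (R i)" using order iN by blast
    have cp: "\<forall>T. T \<subseteq> M i \<longrightarrow>
          v i T - (C (Pf \<union> T) - C Pf) \<le> v i (seq_alloc C M R v i)
            - (C (Pf \<union> seq_alloc C M R v i) - C Pf)"
      unfolding seq_alloc_def Pf_def using choice_prop[of M i R, OF fi oi] by blast
    have Si: "S i \<subseteq> M i" using S iN by blast
    have a: "v i (S i) - (C (Pf \<union> S i) - C Pf) \<le> v i (seq_alloc C M R v i)
            - (C (Pf \<union> seq_alloc C M R v i) - C Pf)" using cp Si by blast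
    have PM: "Pf \<subseteq> (\<Union>i<n. M i)" unfolding Pf_def using prefix_sub[OF fin order less_imp_le[OF iN], of C v] .
    have SM: "S i \<subseteq> (\<Union>i<n. M i)" using Si iN by blast
    have b: "C (Pf \<union> S i) \<le> C Pf + C (S i)" by (rule sa[OF PM SM])
    have SU: "S i \<subseteq> U" unfolding U_def using iN by blast
    have c: "C (S i) \<le> C U" by (rule mono[OF SU UM])
    show ?thesis using a b c unfolding price Pf_def[symmetric] g_def by simp
  qed
  have "social_cost n C M v (seq_alloc C M R v)
      = (\<Sum>i<n. v i (M i) - v i (seq_alloc C M R v i) + seq_price C M R v i)"
    unfolding social_cost_def BB[symmetric] by (simp add: sum.distrib)
  also have "\<dots> \<le> (\<Sum>i<n. g i + C U)" by (rule sum_mono) (use per in auto)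
  also have "\<dots> = sum g {..<n} + real n * C U" by (simp add: sum.distrib)
  also have "\<dots> \<le> real n * social_cost n C M v S"
  proof -
    have sg: "sum g {..<n} \<ge> 0" by (rule sum_nonneg) (use g0 in simp)
    have "sum g {..<n} \<le> real n * sum g {..<n}"
    proof (cases "n = 0")
      case True then show ?thesis by simp
    next
      case False then have "real n \<ge> 1" by simp
      then show ?thesis using sg by (metis mult_le_cancel_right1 not_le)
    qed
    then show ?thesis unfolding social_cost_def U_def g_def by (simp add: distrib_left)
  qed
  finally show "social_cost n C M v (seq_alloc C M R v) \<le> real n * social_cost n C M v S" .
qed

end
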